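(* For all $n\ge0$, $$F_n(x,y,q)F_{n+1}(x,y,q)=\sum_{j=0}^nxy^jq^{\lfloor j^2/2\rfloor}F_{n-j}(xq^j,yq^j,q)F_{n-j}(xq^{j+1},yq^{j+1},q).$$
   Context: $\Pi_n(13/2,123)$ is the set of layered matchings of $[n]$: set partitions whose blocks are consecutive intervals $[1,i_1]/\dots/[i_{k-1}+1,n]$, each of size $1$ or $2$. $\Pi_0(13/2,123)$ consists of the empty partition. For $\pi=B_1/\dots/B_k$ with $\min B_1<\dots<\min B_k$, $rb(\pi)$ is the number of pairs $(b,B_j)$ with $b\in B_i$, $j>i$, $\max B_j>b$. Let $s(\pi)$ and $d(\pi)$ be the numbers of blocks of size $1$ and $2$. Define $F_n(x,y,q)=\sum_{\pi\in\Pi_n(13/2,123)}x^{s(\pi)}y^{d(\pi)}q^{rb(\pi)}$, so $F_0=1$ and $F_1=x$. $F_n(xq^a,yq^a,q)$ denotes the substitution $x\mapsto xq^a$, $y\mapsto yq^a$. *)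

theory Defs
  imports Main "HOL-Library.Disjoint_Sets"
begin

definition layered_matchings :: "nat \<Rightarrow> nat set set set" where
  "layered_matchings n = {P. partition_on {1..n} P \<and>
      (\<forall>B\<in>P. \<exists>a. B = {a} \<or> B = {a, Suc a})}"

definition rb :: "nat set set \<Rightarrow> nat" where
  "rb P = card {(b, C). \<exists>B\<in>P. b \<in> B \<and> C \<in> P \<and> Min B < Min C \<and> b < Max C}"

definition singles :: "nat set set \<Rightarrow> nat" where
  "singles P = card {B\<in>P. card B = 1}"

definition doubles :: "nat set set \<Rightarrow> nat" where
  "doubles P = card {B\<in>P. card B = 2}"

definition F :: "nat \<Rightarrow> 'a::comm_ring_1 \<Rightarrow> 'a \<Rightarrow> 'a \<Rightarrow> 'a" where
  "F n x y q = (\<Sum>P\<in>layered_matchings n. x ^ singles P * y ^ doubles P * q ^ rb P)"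

end

theory Submission
  imports Defs
begin

fun H :: "nat \<Rightarrow> 'a::comm_ring_1 \<Rightarrow> 'a \<Rightarrow> 'a \<Rightarrow> 'a" where
  "H 0 x y q = 1"
| "H (Suc 0) x y q = x"
| "H (Suc (Suc n)) x y q = x * H (Suc n) (x*q) (y*q) q + y * H n (x*q^2) (y*q^2) q"

lemma div_aux: "(Suc (Suc k))^2 div 2 = k^2 div 2 + 2*k + 2"
proof -
  have "(Suc (Suc k))^2 = k^2 + 2*(2*k+2)" by (simp add: power2_eq_square algebra_simps)
  then show ?thesis by simp
qed

lemma H_id:
  fixes x y q :: "'a::comm_ring_1"
  shows "H n x y q * H (n + 1) x y q =
    (\<Sum>j = 0..n. x * y ^ j * q ^ (j ^ 2 div 2)
        * H (n - j) (x * q ^ j) (y * q ^ j) q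
        * H (n - j) (x * q ^ (j + 1)) (y * q ^ (j + 1)) q)"
proof (induction n arbitrary: x y rule: less_induct)
  case (less n)
  show ?case
  proof (cases n)
    case 0 then show ?thesis by simp
  next
    case (Suc n1)
    show ?thesis
    proof (cases n1)
      case 0 then show ?thesis using Suc by (simp add: algebra_simps power2_eq_square)
    next
      case (Suc m)
      have n: "n = Suc (Suc m)" using Suc \<open>n = Suc n1\<close> by simp
      have IH: "H m (x*q^2) (y*q^2) q * H (m + 1) (x*q^2) (y*q^2) q =
        (\<Sum>j = 0..m. (x*q^2) * (y*q^2) ^ j * q ^ (j ^ 2 div 2)
        * H (m - j) ((x*q^2) * q ^ j) ((y*q^2) * q ^ j) q
        * H (m - j) ((x*q^2) * q ^ (j + 1)) ((y*q^2) * q ^ (j + 1)) q)"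
        using less.IH[of m] n by simp
      have L: "H n x y q * H (n+1) x y q
         = x * (H (Suc (Suc m)) x y q * H (Suc (Suc m)) (x*q) (y*q) q)
           + x * y * (H (Suc m) (x*q) (y*q) q * H (Suc m) (x*q^2) (y*q^2) q)
           + y^2 * (H m (x*q^2) (y*q^2) q * H (m + 1) (x*q^2) (y*q^2) q)"
        unfolding n by (simp add: algebra_simps power2_eq_square)
      have R: "(\<Sum>j = 0..n. x * y ^ j * q ^ (j ^ 2 div 2)
        * H (n - j) (x * q ^ j) (y * q ^ j) q
        * H (n - j) (x * q ^ (j + 1)) (y * q ^ (j + 1)) q)
        = x * (H (Suc (Suc m)) x y q * H (Suc (Suc m)) (x*q) (y*q) q)
           + x * y * (H (Suc m) (x*q) (y*q) q * H (Suc m) (x*q^2) (y*q^2) q)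
           + (\<Sum>j = 0..m. x * y ^ (Suc (Suc j)) * q ^ ((Suc (Suc j)) ^ 2 div 2)
        * H (m - j) (x * q ^ (Suc (Suc j))) (y * q ^ (Suc (Suc j))) q
        * H (m - j) (x * q ^ (Suc (Suc j) + 1)) (y * q ^ (Suc (Suc j) + 1)) q)"
        unfolding n sum.atLeast0_atMost_Suc_shift by (simp add: algebra_simps power2_eq_square)
      have S: "(\<Sum>j = 0..m. x * y ^ (Suc (Suc j)) * q ^ ((Suc (Suc j)) ^ 2 div 2)
        * H (m - j) (x * q ^ (Suc (Suc j))) (y * q ^ (Suc (Suc j))) q
        * H (m - j) (x * q ^ (Suc (Suc j) + 1)) (y * q ^ (Suc (Suc j) + 1)) q)
        = y^2 * (\<Sum>j = 0..m. (x*q^2) * (y*q^2) ^ j * q ^ (j ^ 2 div 2)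
        * H (m - j) ((x*q^2) * q ^ j) ((y*q^2) * q ^ j) q
        * H (m - j) ((x*q^2) * q ^ (j + 1)) ((y*q^2) * q ^ (j + 1)) q)"
        unfolding sum_distrib_left
      proof (rule sum.cong[OF refl])
        fix j assume "j \<in> {0..m}"
        have e1: "x * q ^ Suc (Suc j) = x * q^2 * q^j" "y * q ^ Suc (Suc j) = y * q^2 * q^j"
          "x * q ^ (Suc (Suc j)+1) = x * q^2 * q^(j+1)" "y * q ^ (Suc (Suc j)+1) = y * q^2 * q^(j+1)"
          by (simp_all add: power_add[symmetric] algebra_simps)
        show "x * y ^ (Suc (Suc j)) * q ^ ((Suc (Suc j)) ^ 2 div 2)
        * H (m - j) (x * q ^ (Suc (Suc j))) (y * q ^ (Suc (Suc j))) q
        * H (m - j) (x * q ^ (Suc (Suc j) + 1)) (y * q ^ (Suc (Suc j) + 1)) q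
        = y^2 * ((x*q^2) * (y*q^2) ^ j * q ^ (j ^ 2 div 2)
        * H (m - j) ((x*q^2) * q ^ j) ((y*q^2) * q ^ j) q
        * H (m - j) ((x*q^2) * q ^ (j + 1)) ((y*q^2) * q ^ (j + 1)) q)"
          unfolding e1 div_aux by (simp add: power_add power_mult_distrib power_mult algebra_simps power2_eq_square)
      qed
      show ?thesis using L R S IH by simp
    qed
  qed
qed


definition LMo :: "nat \<Rightarrow> nat \<Rightarrow> nat set set set" where
  "LMo k n = {P. partition_on {Suc k..k+n} P \<and> (\<forall>B\<in>P. \<exists>a. B = {a} \<or> B = {a, Suc a})}"

definition w :: "nat set set \<Rightarrow> 'a::comm_ring_1 \<Rightarrow> 'a \<Rightarrow> 'a \<Rightarrow> 'a" where
  "w P x y q = x ^ singles P * y ^ doubles P * q ^ rb P"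

definition G :: "nat \<Rightarrow> nat \<Rightarrow> 'a::comm_ring_1 \<Rightarrow> 'a \<Rightarrow> 'a \<Rightarrow> 'a" where
  "G k n x y q = (\<Sum>P\<in>LMo k n. w P x y q)"

lemma LMo_finite: "P \<in> LMo k n \<Longrightarrow> finite P"
  unfolding LMo_def using finite_elements by blast

lemma LMo_blocks: "P \<in> LMo k n \<Longrightarrow> B \<in> P \<Longrightarrow> finite B \<and> B \<noteq> {} \<and> (card B = 1 \<or> card B = 2) \<and> B \<subseteq> {Suc k..k+n}"
  unfolding LMo_def partition_on_def by auto

lemma LMo_0: "LMo k 0 = {{}}"
  unfolding LMo_def by (auto simp: partition_on_empty)

lemma rb_insert:
  assumes fin: "finite P" and fB: "finite B0" "B0 \<noteq> {}"
    and blocks: "\<And>C. C \<in> P \<Longrightarrow> finite C \<and> C \<noteq> {}"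
    and less: "\<And>C b c. C \<in> P \<Longrightarrow> b \<in> B0 \<Longrightarrow> c \<in> C \<Longrightarrow> b < c"
  shows "rb (insert B0 P) = rb P + card B0 * card P"
proof -
  let ?S = "\<lambda>P. {(b, C). \<exists>B\<in>P. b \<in> B \<and> C \<in> P \<and> Min B < Min C \<and> b < Max C}"
  have eq: "?S (insert B0 P) = ?S P \<union> (B0 \<times> P)"
  proof (rule set_eqI, rule iffI)
    fix z assume "z \<in> ?S (insert B0 P)"
    then obtain b C B where z: "z = (b, C)" and B: "B \<in> insert B0 P" "b \<in> B" "C \<in> insert B0 P"
      "Min B < Min C" "b < Max C" by blast
    have "C \<noteq> B0"
    proof
      assume "C = B0"
      then have "B \<noteq> B0" using B by auto
      then have "B \<in> P" using B by auto
      have "Min B0 < Min B" using less[OF \<open>B \<in> P\<close>] blocks[OF \<open>B \<in> P\<close>] fB by simp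
      then show False using B \<open>C = B0\<close> by simp
    qed
    then have "C \<in> P" using B by auto
    then show "z \<in> ?S P \<union> (B0 \<times> P)" using B z by auto
  next
    fix z assume "z \<in> ?S P \<union> (B0 \<times> P)"
    then show "z \<in> ?S (insert B0 P)"
    proof
      assume "z \<in> ?S P" then show ?thesis by blast
    next
      assume "z \<in> B0 \<times> P"
      then obtain b C where z: "z = (b, C)" "b \<in> B0" "C \<in> P" by blast
      have "Min B0 < Min C" using less[OF z(3)] blocks[OF z(3)] fB by simp
      moreover have "b < Max C" using less[OF z(3) z(2)] blocks[OF z(3)] by simp
      ultimately show ?thesis using z by blast
    qed
  qed
  have f1: "finite (?S P)"
    by (rule finite_subset[of _ "(\<Union>P) \<times> P"]) (use fin blocks in auto)
  have d: "?S P \<inter> (B0 \<times> P) = {}"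
  proof (rule ccontr)
    assume "?S P \<inter> (B0 \<times> P) \<noteq> {}"
    then obtain b C B where "b \<in> B0" "B \<in> P" "b \<in> B" by blast
    then show False using less by blast
  qed
  have "rb (insert B0 P) = card (?S P \<union> (B0 \<times> P))" unfolding rb_def eq ..
  also have "\<dots> = card (?S P) + card (B0 \<times> P)"
    by (rule card_Un_disjoint) (use f1 fin fB d in auto)
  finally show ?thesis unfolding rb_def by (simp add: card_cartesian_product)
qed


lemma card_sd: "P \<in> LMo k n \<Longrightarrow> card P = singles P + doubles P"
proof -
  assume P: "P \<in> LMo k n"
  have "P = {B\<in>P. card B = 1} \<union> {B\<in>P. card B = 2}" using LMo_blocks[OF P] by auto
  then have "card P = card ({B\<in>P. card B = 1} \<union> {B\<in>P. card B = 2})" by simp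
  also have "\<dots> = singles P + doubles P" unfolding singles_def doubles_def
    by (rule card_Un_disjoint) (use LMo_finite[OF P] in auto)
  finally show ?thesis .
qed

lemma LMo_ins1: "P \<in> LMo (Suc k) n \<Longrightarrow> insert {Suc k} P \<in> LMo k (Suc n)"
proof -
  assume P: "P \<in> LMo (Suc k) n"
  have U: "\<Union>P = {Suc (Suc k)..Suc k + n}" using P unfolding LMo_def partition_on_def by auto
  have d: "disjnt {Suc k} (\<Union>P)" unfolding U by (simp add: disjnt_def)
  have e: "{Suc k..k + Suc n} - {Suc k} = {Suc (Suc k)..Suc k + n}" by auto
  have "partition_on {Suc k..k + Suc n} (insert {Suc k} P)"
    unfolding partition_on_insert[OF d] e using P unfolding LMo_def by auto
  then show ?thesis using P unfolding LMo_def by auto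
qed

lemma LMo_ins2: "P \<in> LMo (Suc (Suc k)) n \<Longrightarrow> insert {Suc k, Suc (Suc k)} P \<in> LMo k (Suc (Suc n))"
proof -
  assume P: "P \<in> LMo (Suc (Suc k)) n"
  have U: "\<Union>P = {Suc (Suc (Suc k))..Suc (Suc k) + n}" using P unfolding LMo_def partition_on_def by auto
  have d: "disjnt {Suc k, Suc (Suc k)} (\<Union>P)" unfolding U by (simp add: disjnt_def)
  have e: "{Suc k..k + Suc (Suc n)} - {Suc k, Suc (Suc k)} = {Suc (Suc (Suc k))..Suc (Suc k) + n}" by auto
  have "partition_on {Suc k..k + Suc (Suc n)} (insert {Suc k, Suc (Suc k)} P)"
    unfolding partition_on_insert[OF d] e using P unfolding LMo_def by auto
  then show ?thesis using P unfolding LMo_def by blast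
qed

lemma LMo_rem: "P \<in> LMo k m \<Longrightarrow> B \<in> P \<Longrightarrow> partition_on ({Suc k..k+m} - B) (P - {B})"
proof -
  assume P: "P \<in> LMo k m" and B: "B \<in> P"
  have pp: "partition_on {Suc k..k+m} P" using P unfolding LMo_def by auto
  have d: "disjnt B (\<Union>(P - {B}))"
    using partition_onD2[OF pp] B unfolding disjoint_def disjnt_def by blast
  have "P = insert B (P - {B})" using B by auto
  with pp have "partition_on {Suc k..k+m} (insert B (P - {B}))" by simp
  then show ?thesis unfolding partition_on_insert[OF d] by auto
qed

lemma LMo_rem1: "P \<in> LMo k (Suc n) \<Longrightarrow> {Suc k} \<in> P \<Longrightarrow> P - {{Suc k}} \<in> LMo (Suc k) n"
proof -
  assume P: "P \<in> LMo k (Suc n)" and B: "{Suc k} \<in> P"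
  have e: "{Suc k..k + Suc n} - {Suc k} = {Suc (Suc k)..Suc k + n}" by auto
  show ?thesis using LMo_rem[OF P B] P unfolding e LMo_def by auto
qed

lemma LMo_rem2: "P \<in> LMo k (Suc (Suc n)) \<Longrightarrow> {Suc k, Suc (Suc k)} \<in> P \<Longrightarrow> P - {{Suc k, Suc (Suc k)}} \<in> LMo (Suc (Suc k)) n"
proof -
  assume P: "P \<in> LMo k (Suc (Suc n))" and B: "{Suc k, Suc (Suc k)} \<in> P"
  have e: "{Suc k..k + Suc (Suc n)} - {Suc k, Suc (Suc k)} = {Suc (Suc (Suc k))..Suc (Suc k) + n}" by auto
  show ?thesis using LMo_rem[OF P B] P unfolding e LMo_def by auto
qed

lemma LMo_first: "P \<in> LMo k (Suc n) \<Longrightarrow> {Suc k} \<in> P \<or> (n \<ge> 1 \<and> {Suc k, Suc (Suc k)} \<in> P)"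
proof -
  assume P: "P \<in> LMo k (Suc n)"
  have "Suc k \<in> \<Union>P" using P unfolding LMo_def partition_on_def by auto
  then obtain B where B: "B \<in> P" "Suc k \<in> B" by blast
  have sub: "B \<subseteq> {Suc k..k + Suc n}" using LMo_blocks[OF P B(1)] by auto
  obtain a where a: "B = {a} \<or> B = {a, Suc a}" using P B(1) unfolding LMo_def by auto
  then show ?thesis
  proof
    assume "B = {a}" then show ?thesis using B by auto
  next
    assume Ba: "B = {a, Suc a}"
    then have "a = Suc k \<or> a = k" using B by auto
    moreover have "a \<noteq> k" using sub Ba by auto
    ultimately have "a = Suc k" by simp
    then show ?thesis using sub Ba B by auto
  qed
qed


lemma w_ins1:
  assumes P: "P \<in> LMo (Suc k) n"
  shows "w (insert {Suc k} P) x y q = x * w P (x*q) (y*q) q"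
proof -
  have nin: "{Suc k} \<notin> P" using LMo_blocks[OF P] by fastforce
  have fin: "finite P" using LMo_finite[OF P] .
  have s: "singles (insert {Suc k} P) = Suc (singles P)"
  proof -
    have "{B \<in> insert {Suc k} P. card B = 1} = insert {Suc k} {B\<in>P. card B = 1}" by auto
    then show ?thesis unfolding singles_def using nin fin by simp
  qed
  have d: "doubles (insert {Suc k} P) = doubles P"
  proof -
    have "{B \<in> insert {Suc k} P. card B = 2} = {B\<in>P. card B = 2}" by auto
    then show ?thesis unfolding doubles_def by simp
  qed
  have r: "rb (insert {Suc k} P) = rb P + card P"
    using rb_insert[of P "{Suc k}"] fin LMo_blocks[OF P] by fastforce
  show ?thesis unfolding w_def s d r card_sd[OF P]
    by (simp add: power_add power_mult_distrib algebra_simps)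
qed

lemma pow2_aux: "((q::'a::comm_ring_1)^2) ^ n = (q^n)^2"
  by (metis power_mult mult.commute)

lemma w_ins2:
  assumes P: "P \<in> LMo (Suc (Suc k)) n"
  shows "w (insert {Suc k, Suc (Suc k)} P) x y q = y * w P (x*q^2) (y*q^2) q"
proof -
  have nin: "{Suc k, Suc (Suc k)} \<notin> P" using LMo_blocks[OF P] by fastforce
  have fin: "finite P" using LMo_finite[OF P] .
  have s: "singles (insert {Suc k, Suc (Suc k)} P) = singles P"
  proof -
    have "{B \<in> insert {Suc k, Suc (Suc k)} P. card B = 1} = {B\<in>P. card B = 1}" by auto
    then show ?thesis unfolding singles_def by simp
  qed
  have d: "doubles (insert {Suc k, Suc (Suc k)} P) = Suc (doubles P)"
  proof -
    have "{B \<in> insert {Suc k, Suc (Suc k)} P. card B = 2} = insert {Suc k, Suc (Suc k)} {B\<in>P. card B = 2}" by auto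
    then show ?thesis unfolding doubles_def using nin fin by simp
  qed
  have r: "rb (insert {Suc k, Suc (Suc k)} P) = rb P + 2 * card P"
    using rb_insert[of P "{Suc k, Suc (Suc k)}"] fin LMo_blocks[OF P] by fastforce
  have e: "q ^ (rb P + 2 * (singles P + doubles P)) = q^rb P * (q^2)^singles P * (q^2)^doubles P"
    by (simp add: power_add power_mult)
  show ?thesis unfolding w_def s d r card_sd[OF P] e
    by (simp add: power_mult_distrib algebra_simps)
qed

lemma LMo_dec1: "LMo k (Suc 0) = insert {Suc k} ` LMo (Suc k) 0"
proof (rule set_eqI, rule iffI)
  fix P assume P: "P \<in> LMo k (Suc 0)"
  then have "{Suc k} \<in> P" using LMo_first by fastforce
  then have "P - {{Suc k}} \<in> LMo (Suc k) 0" "P = insert {Suc k} (P - {{Suc k}})"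
    using LMo_rem1[OF P] by auto
  then show "P \<in> insert {Suc k} ` LMo (Suc k) 0" by blast
qed (use LMo_ins1 in auto)

lemma LMo_dec2: "LMo k (Suc (Suc n)) = insert {Suc k} ` LMo (Suc k) (Suc n) \<union>
   insert {Suc k, Suc (Suc k)} ` LMo (Suc (Suc k)) n"
proof (rule set_eqI, rule iffI)
  fix P assume P: "P \<in> LMo k (Suc (Suc n))"
  from LMo_first[OF P] show "P \<in> insert {Suc k} ` LMo (Suc k) (Suc n) \<union>
   insert {Suc k, Suc (Suc k)} ` LMo (Suc (Suc k)) n"
  proof
    assume B: "{Suc k} \<in> P"
    then have "P - {{Suc k}} \<in> LMo (Suc k) (Suc n)" "P = insert {Suc k} (P - {{Suc k}})"
      using LMo_rem1[OF P] by auto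
    then show ?thesis by blast
  next
    assume "1 \<le> Suc n \<and> {Suc k, Suc (Suc k)} \<in> P"
    then have B: "{Suc k, Suc (Suc k)} \<in> P" by simp
    then have "P - {{Suc k, Suc (Suc k)}} \<in> LMo (Suc (Suc k)) n"
       "P = insert {Suc k, Suc (Suc k)} (P - {{Suc k, Suc (Suc k)}})"
      using LMo_rem2[OF P] by auto
    then show ?thesis by blast
  qed
qed (use LMo_ins1 LMo_ins2 in auto)

lemma LMo_fin: "finite (LMo k n)"
proof -
  have "LMo k n \<subseteq> {P. partition_on {Suc k..k+n} P}" unfolding LMo_def by auto
  then show ?thesis using finitely_many_partition_on[of "{Suc k..k+n}"] finite_subset by auto
qed

lemma inj_ins1: "inj_on (insert {Suc k}) (LMo (Suc k) n)"
proof (rule inj_onI)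
  fix P Q assume P: "P \<in> LMo (Suc k) n" and Q: "Q \<in> LMo (Suc k) n" and e: "insert {Suc k} P = insert {Suc k} Q"
  have "{Suc k} \<notin> P" "{Suc k} \<notin> Q" using LMo_blocks[OF P] LMo_blocks[OF Q] by fastforce+
  then show "P = Q" using e by (metis Diff_insert_absorb)
qed

lemma inj_ins2: "inj_on (insert {Suc k, Suc (Suc k)}) (LMo (Suc (Suc k)) n)"
proof (rule inj_onI)
  fix P Q assume P: "P \<in> LMo (Suc (Suc k)) n" and Q: "Q \<in> LMo (Suc (Suc k)) n"
    and e: "insert {Suc k, Suc (Suc k)} P = insert {Suc k, Suc (Suc k)} Q"
  have "{Suc k, Suc (Suc k)} \<notin> P" "{Suc k, Suc (Suc k)} \<notin> Q" using LMo_blocks[OF P] LMo_blocks[OF Q] by fastforce+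
  then show "P = Q" using e by (metis Diff_insert_absorb)
qed

lemma G0: "G k 0 x y q = 1"
  unfolding G_def LMo_0 w_def singles_def doubles_def rb_def by simp

lemma G1: "G k (Suc 0) x y q = x"
proof -
  have "G k (Suc 0) x y q = (\<Sum>P\<in>LMo (Suc k) 0. w (insert {Suc k} P) x y q)"
    unfolding G_def LMo_dec1 by (rule sum.reindex[OF inj_ins1, unfolded comp_def])
  also have "\<dots> = (\<Sum>P\<in>LMo (Suc k) 0. x * w P (x*q) (y*q) q)"
    by (rule sum.cong[OF refl]) (rule w_ins1)
  also have "\<dots> = x * G (Suc k) 0 (x*q) (y*q) q" unfolding G_def sum_distrib_left ..
  finally show ?thesis by (simp add: G0)
qed

lemma G2: "G k (Suc (Suc n)) x y q = x * G (Suc k) (Suc n) (x*q) (y*q) q + y * G (Suc (Suc k)) n (x*q^2) (y*q^2) q"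
proof -
  have disj: "insert {Suc k} ` LMo (Suc k) (Suc n) \<inter> insert {Suc k, Suc (Suc k)} ` LMo (Suc (Suc k)) n = {}"
  proof (rule ccontr)
    assume "\<not> ?thesis"
    then obtain P Q where P: "P \<in> LMo (Suc k) (Suc n)" and Q: "Q \<in> LMo (Suc (Suc k)) n"
      and e: "insert {Suc k} P = insert {Suc k, Suc (Suc k)} Q" by blast
    have "{Suc k} \<in> insert {Suc k} P" by (rule insertI1)
    then have "{Suc k} \<in> insert {Suc k, Suc (Suc k)} Q" unfolding e .
    moreover have "{Suc k} \<notin> Q" using LMo_blocks[OF Q] by fastforce
    ultimately have "{Suc k} = {Suc k, Suc (Suc k)}" by blast
    then have "Suc (Suc k) \<in> {Suc k}" by (metis insertCI)
    then show False by simp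
  qed
  have A: "G k (Suc (Suc n)) x y q = (\<Sum>P\<in>insert {Suc k} ` LMo (Suc k) (Suc n). w P x y q)
     + (\<Sum>P\<in>insert {Suc k, Suc (Suc k)} ` LMo (Suc (Suc k)) n. w P x y q)"
    unfolding G_def LMo_dec2
    by (rule sum.union_disjoint[OF finite_imageI[OF LMo_fin] finite_imageI[OF LMo_fin] disj])
  have B: "(\<Sum>P\<in>insert {Suc k} ` LMo (Suc k) (Suc n). w P x y q) = (\<Sum>P\<in>LMo (Suc k) (Suc n). w (insert {Suc k} P) x y q)"
    by (rule sum.reindex[OF inj_ins1, unfolded comp_def])
  have C: "(\<Sum>P\<in>LMo (Suc k) (Suc n). w (insert {Suc k} P) x y q) = x * G (Suc k) (Suc n) (x*q) (y*q) q"
    unfolding G_def sum_distrib_left by (rule sum.cong[OF refl]) (rule w_ins1)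
  have D: "(\<Sum>P\<in>insert {Suc k, Suc (Suc k)} ` LMo (Suc (Suc k)) n. w P x y q) = (\<Sum>P\<in>LMo (Suc (Suc k)) n. w (insert {Suc k, Suc (Suc k)} P) x y q)"
    by (rule sum.reindex[OF inj_ins2, unfolded comp_def])
  have E: "(\<Sum>P\<in>LMo (Suc (Suc k)) n. w (insert {Suc k, Suc (Suc k)} P) x y q) = y * G (Suc (Suc k)) n (x*q^2) (y*q^2) q"
    unfolding G_def sum_distrib_left by (rule sum.cong[OF refl]) (rule w_ins2)
  show ?thesis unfolding A B C D E ..
qed

lemma G_H: "G k n x y q = H n x y q"
proof (induction n arbitrary: k x y rule: less_induct)
  case (less n)
  show ?case
  proof (cases n)
    case 0 then show ?thesis by (simp add: G0)
  next
    case (Suc m)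
    show ?thesis
    proof (cases m)
      case 0 then show ?thesis using Suc by (simp add: G1)
    next
      case (Suc m')
      then show ?thesis using \<open>n = Suc m\<close> less.IH by (simp add: G2)
    qed
  qed
qed

lemma F_H: "F n x y q = H n x y q"
proof -
  have "layered_matchings n = LMo 0 n" unfolding layered_matchings_def LMo_def by simp
  then show ?thesis unfolding F_def G_H[of 0 n, symmetric] G_def w_def by simp
qed

theorem theorem4p5:
  fixes x y q :: "'a::comm_ring_1" and n :: nat
  shows "F n x y q * F (n + 1) x y q =
    (\<Sum>j = 0..n. x * y ^ j * q ^ (j ^ 2 div 2)
        * F (n - j) (x * q ^ j) (y * q ^ j) q
        * F (n - j) (x * q ^ (j + 1)) (y * q ^ (j + 1)) q)"
  unfolding F_H by (rule H_id)

end
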